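(* Let $G$ be a group, $n\ge2$, $X=\{x_1,\dots,x_n\}$, fix a function $X\to G$, and let $(\mathcal X_l)_{l\ge1}$ be a non-backtracking random walk on $(G,X)$ which is irreducible as a Markov chain on $\Omega$. Then $(\mathcal X_l)$ has period $2$ if and only if there exists a subgroup $H\le G$ of index $2$ such that $x_i\notin H$ for all $i=1,\dots,n$.
   Context: Let $G$ be a group, $X=\{x_1,\dots,x_n\}$ a set with $n\ge 2$, and fix a function $X\to G$; we identify each $x_i$ with its image in $G$. Let $\Omega=G\times\{\pm1,\pm2,\dots,\pm n\}$, with elements written $(g,\epsilon i)$, $g\in G$, $\epsilon=\pm1$, $i\in\{1,\dots,n\}$. A non-backtracking random walk on $(G,X)$ is a Markov chain $(\mathcal X_l)_{l\ge1}$ on $\Omega$ with transition probabilities $\mathbb P(\mathcal X_{l+1}=(g,\epsilon i)\mid \mathcal X_l=(h,\epsilon' j))=\alpha_{\epsilon' j,\epsilon i}$ if $g=hx_i^{\epsilon}$ and $\epsilon i\neq -\epsilon' j$, and $=0$ otherwise, where the $\alpha_{\epsilon' j,\epsilon i}$ are positive constants with $\sum_{\epsilon i\neq-\epsilon' j}\alpha_{\epsilon' j,\epsilon i}=1$ for each $\epsilon' j$; and with initial distribution $\mathbb P(\mathcal X_1=(g,\epsilon i))=\beta_{\epsilon i}$ if $g=x_i^{\epsilon}$ and $0$ otherwise, for positive constants $\beta_{\epsilon i}$ summing to $1$. Irreducibility and period refer to the Markov chain on the full state space $\Omega$. *)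

theory Defs
  imports Complex_Main "HOL-Algebra.Coset"
begin

text \<open>Signed directions: the set of labels \<open>\<epsilon> i\<close>, \<open>\<epsilon> = \<plusminus>1\<close>, \<open>1 \<le> i \<le> n\<close>,
  encoded as nonzero integers in \<open>{-n..n}\<close>.\<close>
definition dirs :: "nat \<Rightarrow> int set" where
  "dirs n = {s. s \<noteq> 0 \<and> - int n \<le> s \<and> s \<le> int n}"

definition Omega :: "('a, 'b) monoid_scheme \<Rightarrow> nat \<Rightarrow> ('a \<times> int) set" where
  "Omega G n = carrier G \<times> dirs n"

definition gen_pow :: "('a, 'b) monoid_scheme \<Rightarrow> (nat \<Rightarrow> 'a) \<Rightarrow> int \<Rightarrow> 'a" where
  "gen_pow G x s = (if 0 < s then x (nat s) else inv\<^bsub>G\<^esub> (x (nat (- s))))"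

definition nbrw_P :: "('a, 'b) monoid_scheme \<Rightarrow> nat \<Rightarrow> (nat \<Rightarrow> 'a) \<Rightarrow> (int \<Rightarrow> int \<Rightarrow> real)
    \<Rightarrow> 'a \<times> int \<Rightarrow> 'a \<times> int \<Rightarrow> real" where
  "nbrw_P G n x alpha a b =
     (if a \<in> Omega G n \<and> b \<in> Omega G n \<and> snd b \<noteq> - snd a
         \<and> fst b = fst a \<otimes>\<^bsub>G\<^esub> gen_pow G x (snd b)
      then alpha (snd a) (snd b) else 0)"

text \<open>Since from a state \<open>(h, s)\<close>
  only the states \<open>(h x_t^{\<epsilon>}, t)\<close> can be reached in one step, the sum defining the
  matrix product is the finite sum over the labels \<open>t\<close>.\<close>
fun nbrw_Pm :: "('a, 'b) monoid_scheme \<Rightarrow> nat \<Rightarrow> (nat \<Rightarrow> 'a) \<Rightarrow> (int \<Rightarrow> int \<Rightarrow> real)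
    \<Rightarrow> nat \<Rightarrow> 'a \<times> int \<Rightarrow> 'a \<times> int \<Rightarrow> real" where
  "nbrw_Pm G n x alpha 0 a b = (if a = b then 1 else 0)"
| "nbrw_Pm G n x alpha (Suc m) a b =
     (\<Sum>t\<in>dirs n. nbrw_P G n x alpha a (fst a \<otimes>\<^bsub>G\<^esub> gen_pow G x t, t)
                  * nbrw_Pm G n x alpha m (fst a \<otimes>\<^bsub>G\<^esub> gen_pow G x t, t) b)"

definition nbrw_irreducible :: "('a, 'b) monoid_scheme \<Rightarrow> nat \<Rightarrow> (nat \<Rightarrow> 'a)
    \<Rightarrow> (int \<Rightarrow> int \<Rightarrow> real) \<Rightarrow> bool" where
  "nbrw_irreducible G n x alpha \<longleftrightarrow>
     (\<forall>a\<in>Omega G n. \<forall>b\<in>Omega G n. \<exists>m. 0 < nbrw_Pm G n x alpha m a b)"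

definition state_period :: "('a, 'b) monoid_scheme \<Rightarrow> nat \<Rightarrow> (nat \<Rightarrow> 'a)
    \<Rightarrow> (int \<Rightarrow> int \<Rightarrow> real) \<Rightarrow> 'a \<times> int \<Rightarrow> nat" where
  "state_period G n x alpha a = Gcd {m. 1 \<le> m \<and> 0 < nbrw_Pm G n x alpha m a a}"

definition nbrw_has_period :: "('a, 'b) monoid_scheme \<Rightarrow> nat \<Rightarrow> (nat \<Rightarrow> 'a)
    \<Rightarrow> (int \<Rightarrow> int \<Rightarrow> real) \<Rightarrow> nat \<Rightarrow> bool" where
  "nbrw_has_period G n x alpha d \<longleftrightarrow> (\<forall>a\<in>Omega G n. state_period G n x alpha a = d)"

definition nbrw_params :: "nat \<Rightarrow> (int \<Rightarrow> int \<Rightarrow> real) \<Rightarrow> (int \<Rightarrow> real) \<Rightarrow> bool" where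
  "nbrw_params n alpha beta \<longleftrightarrow>
     (\<forall>s\<in>dirs n. \<forall>t\<in>dirs n. t \<noteq> - s \<longrightarrow> 0 < alpha s t)
   \<and> (\<forall>s\<in>dirs n. (\<Sum>t\<in>dirs n - {- s}. alpha s t) = 1)
   \<and> (\<forall>s\<in>dirs n. 0 < beta s) \<and> (\<Sum>s\<in>dirs n. beta s) = 1"

end

theory Submission
  imports Defs
begin

locale nbw =
  fixes G :: "('a, 'b) monoid_scheme" (structure) and n :: nat and x :: "nat \<Rightarrow> 'a"
    and alpha :: "int \<Rightarrow> int \<Rightarrow> real"
  assumes grp: "group G"
    and n2: "2 \<le> n"
    and xc: "\<forall>i\<in>{1..n}. x i \<in> carrier G"
    and apos: "\<forall>s\<in>dirs n. \<forall>t\<in>dirs n. t \<noteq> - s \<longrightarrow> 0 < alpha s t"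
    and irr: "nbrw_irreducible G n x alpha"
begin

definition stp :: "'a \<times> int \<Rightarrow> 'a \<times> int \<Rightarrow> bool" where
  "stp a b \<longleftrightarrow> a \<in> Omega G n \<and> b \<in> Omega G n \<and> snd b \<noteq> - snd a
         \<and> fst b = fst a \<otimes>\<^bsub>G\<^esub> gen_pow G x (snd b)"

inductive walk :: "nat \<Rightarrow> 'a \<times> int \<Rightarrow> 'a \<times> int \<Rightarrow> bool" where
  w0: "walk 0 a a"
| wS: "stp a c \<Longrightarrow> walk m c b \<Longrightarrow> walk (Suc m) a b"

lemma finite_dirs: "finite (dirs n)"
  by (rule finite_subset[of _ "{- int n..int n}"]) (auto simp: dirs_def)

lemma gp_carrier: "t \<in> dirs n \<Longrightarrow> gen_pow G x t \<in> carrier G"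
proof -
  assume t: "t \<in> dirs n"
  show ?thesis
  proof (cases "0 < t")
    case True
    then have "nat t \<in> {1..n}" using t by (auto simp: dirs_def)
    then show ?thesis using True xc by (simp add: gen_pow_def)
  next
    case False
    then have "nat (- t) \<in> {1..n}" using t by (auto simp: dirs_def)
    then show ?thesis using False xc grp by (simp add: gen_pow_def group.inv_closed)
  qed
qed

lemma P_nonneg: "0 \<le> nbrw_P G n x alpha a b"
  using apos by (auto simp: nbrw_P_def Omega_def less_imp_le)

lemma P_pos: "0 < nbrw_P G n x alpha a b \<longleftrightarrow> stp a b"
  using apos by (auto simp: nbrw_P_def Omega_def stp_def)

lemma Pm_nonneg: "0 \<le> nbrw_Pm G n x alpha m a b"
  by (induction m arbitrary: a) (auto intro!: sum_nonneg mult_nonneg_nonneg P_nonneg)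

lemma stp_form: "stp a c \<Longrightarrow> c = (fst a \<otimes>\<^bsub>G\<^esub> gen_pow G x (snd c), snd c) \<and> snd c \<in> dirs n"
  by (cases c) (auto simp: stp_def Omega_def)

lemma sum_pos_iff_ex:
  fixes f :: "'c \<Rightarrow> real"
  assumes "finite I" "\<And>i. i \<in> I \<Longrightarrow> 0 \<le> f i"
  shows "0 < sum f I \<longleftrightarrow> (\<exists>i\<in>I. 0 < f i)"
proof
  assume "0 < sum f I"
  show "\<exists>i\<in>I. 0 < f i"
  proof (rule ccontr)
    assume "\<not> ?thesis"
    then have "sum f I \<le> 0" by (intro sum_nonpos) (auto simp: not_less)
    with \<open>0 < sum f I\<close> show False by simp
  qed
next
  assume "\<exists>i\<in>I. 0 < f i"
  then show "0 < sum f I" using assms by (metis sum_pos2)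
qed

lemma Pm_walk: "0 < nbrw_Pm G n x alpha m a b \<longleftrightarrow> walk m a b"
proof (induction m arbitrary: a)
  case 0
  then show ?case by (auto intro: w0 elim: walk.cases)
next
  case (Suc m)
  let ?c = "\<lambda>t. (fst a \<otimes>\<^bsub>G\<^esub> gen_pow G x t, t)"
  have "0 < nbrw_Pm G n x alpha (Suc m) a b \<longleftrightarrow>
     (\<exists>t\<in>dirs n. 0 < nbrw_P G n x alpha a (?c t) * nbrw_Pm G n x alpha m (?c t) b)"
    using finite_dirs by (simp add: sum_pos_iff_ex P_nonneg Pm_nonneg)
  also have "\<dots> \<longleftrightarrow> (\<exists>t\<in>dirs n. stp a (?c t) \<and> walk m (?c t) b)"
    using Suc.IH by (simp add: zero_less_mult_iff P_nonneg Pm_nonneg P_pos)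
      (meson P_nonneg Pm_nonneg P_pos not_less order.antisym)
  also have "\<dots> \<longleftrightarrow> walk (Suc m) a b"
  proof
    assume "\<exists>t\<in>dirs n. stp a (?c t) \<and> walk m (?c t) b"
    then show "walk (Suc m) a b" by (auto intro: wS)
  next
    assume "walk (Suc m) a b"
    then obtain c where "stp a c" "walk m c b" by (auto elim: walk.cases)
    then show "\<exists>t\<in>dirs n. stp a (?c t) \<and> walk m (?c t) b"
      using stp_form[of a c] by (intro bexI[of _ "snd c"]) auto
  qed
  finally show ?case .
qed

lemma walk_app: "walk m a b \<Longrightarrow> walk k b c \<Longrightarrow> walk (m + k) a c"
  by (induction rule: walk.induct) (auto intro: wS)

lemma walk_snoc: "walk m a b \<Longrightarrow> stp b c \<Longrightarrow> walk (Suc m) a c"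
  using walk_app[of m a b 1 c] by (auto intro: wS w0)

lemma gp_pos: "i \<in> {1..n} \<Longrightarrow> gen_pow G x (int i) = x i"
  by (auto simp: gen_pow_def)

lemma dirs_pos: "i \<in> {1..n} \<Longrightarrow> int i \<in> dirs n"
  by (auto simp: dirs_def)

lemma dirs_neg: "i \<in> {1..n} \<Longrightarrow> - int i \<in> dirs n"
  by (auto simp: dirs_def)

lemma walk_f:
  fixes f :: "'a \<Rightarrow> int"
  assumes F: "\<forall>h\<in>carrier G. \<forall>t\<in>dirs n. d dvd (f (h \<otimes>\<^bsub>G\<^esub> gen_pow G x t) - f h - 1)"
  shows "walk m a b \<Longrightarrow> d dvd (f (fst b) - f (fst a) - int m)"
proof (induction rule: walk.induct)
  case (w0 a)
  then show ?case by simp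
next
  case (wS a c m b)
  have "fst a \<in> carrier G" using wS(1) by (auto simp: stp_def Omega_def)
  then have "d dvd (f (fst c) - f (fst a) - 1)"
    using F stp_form[OF wS(1)] by (metis fstI)
  from dvd_add[OF this wS(3)] show ?case by (simp add: algebra_simps)
qed

lemma walk_transl:
  assumes g: "g \<in> carrier G"
  shows "walk m a b \<Longrightarrow> walk m (g \<otimes>\<^bsub>G\<^esub> fst a, snd a) (g \<otimes>\<^bsub>G\<^esub> fst b, snd b)"
proof (induction rule: walk.induct)
  case (w0 a)
  then show ?case by (auto intro: walk.w0)
next
  case (wS a c m b)
  have "stp (g \<otimes>\<^bsub>G\<^esub> fst a, snd a) (g \<otimes>\<^bsub>G\<^esub> fst c, snd c)"
    using wS(1) g grp gp_carrier
    by (auto simp: stp_def Omega_def group.is_monoid monoid.m_closed monoid.m_assoc)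
  then show ?case using wS(3) by (auto intro: walk.wS)
qed

lemma common_succ:
  assumes "s \<in> dirs n" "s' \<in> dirs n"
  shows "\<exists>t\<in>dirs n. t \<noteq> - s \<and> t \<noteq> - s'"
proof -
  have "1 \<in> dirs n" "-1 \<in> dirs n" "2 \<in> dirs n" using n2 by (auto simp: dirs_def)
  show ?thesis
  proof (cases "-s \<noteq> 1 \<and> -s' \<noteq> 1")
    case True then show ?thesis using \<open>1 \<in> dirs n\<close> by (intro bexI[where x=1]) auto
  next
    case F1: False
    show ?thesis
    proof (cases "-s \<noteq> -1 \<and> -s' \<noteq> -1")
      case True then show ?thesis using \<open>-1 \<in> dirs n\<close> by (intro bexI[where x="-1"]) auto
    next
      case False
      with F1 have "t \<noteq> -s \<and> t \<noteq> -s'" if "t = 2" for t :: int using that by auto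
      then show ?thesis using \<open>2 \<in> dirs n\<close> by blast
    qed
  qed
qed

lemma irr': "a \<in> Omega G n \<Longrightarrow> b \<in> Omega G n \<Longrightarrow> \<exists>m. walk m a b"
  using irr by (auto simp: nbrw_irreducible_def Pm_walk)

lemma classfun:
  assumes z0: "z0 \<in> Omega G n" and dv: "\<forall>m. walk m z0 z0 \<longrightarrow> d dvd int m"
  shows "\<exists>f::'a \<Rightarrow> int. \<forall>h\<in>carrier G. \<forall>t\<in>dirs n. d dvd (f (h \<otimes>\<^bsub>G\<^esub> gen_pow G x t) - f h - 1)"
proof -
  define c where "c b = int (SOME m. walk m z0 b)" for b
  have cw: "walk (nat (c b)) z0 b" if "b \<in> Omega G n" for b
  proof -
    from irr'[OF z0 that] have "\<exists>m. walk m z0 b" .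
    then have "walk (SOME m. walk m z0 b) z0 b" by (rule someI_ex)
    then show ?thesis by (simp add: c_def)
  qed
  have uniq: "d dvd (int m - int m')" if bb: "b \<in> Omega G n" "walk m z0 b" "walk m' z0 b" for b m m'
  proof -
    obtain k where k: "walk k b z0" using irr'[OF bb(1) z0] by blast
    have "d dvd int (m + k)" "d dvd int (m' + k)"
      using dv walk_app[OF bb(2) k] walk_app[OF bb(3) k] by auto
    from dvd_diff[OF this] show ?thesis by simp
  qed
  have cstep: "d dvd (c b - c a - 1)" if "stp a b" for a b
  proof -
    have ab: "a \<in> Omega G n" "b \<in> Omega G n" using that by (auto simp: stp_def)
    have "walk (Suc (nat (c a))) z0 b" using walk_snoc[OF cw[OF ab(1)] that] .
    from uniq[OF ab(2) cw[OF ab(2)] this] have "d dvd (c b - (c a + 1))"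
      by (simp add: c_def add.commute)
    then show ?thesis by (simp add: algebra_simps)
  qed
  have csame: "d dvd (c (h, s) - c (h, s'))"
    if "h \<in> carrier G" "s \<in> dirs n" "s' \<in> dirs n" for h s s'
  proof -
    have "\<exists>t\<in>dirs n. t \<noteq> - s \<and> t \<noteq> - s'" using common_succ that by blast
    then obtain t where t: "t \<in> dirs n" "t \<noteq> - s" "t \<noteq> - s'" by blast
    let ?b = "(h \<otimes>\<^bsub>G\<^esub> gen_pow G x t, t)"
    have "?b \<in> Omega G n" using that t gp_carrier grp
      by (auto simp: Omega_def group.is_monoid monoid.m_closed)
    then have "stp (h, s) ?b" "stp (h, s') ?b" using that t by (auto simp: stp_def Omega_def)
    from dvd_diff[OF cstep[OF this(2)] cstep[OF this(1)]] show ?thesis by simp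
  qed
  define f where "f h = c (h, 1)" for h
  have one: "(1::int) \<in> dirs n" using n2 by (auto simp: dirs_def)
  show ?thesis
  proof (intro exI[of _ f] ballI)
    fix h t assume h: "h \<in> carrier G" and t: "t \<in> dirs n"
    let ?h = "h \<otimes>\<^bsub>G\<^esub> gen_pow G x t"
    have hc: "?h \<in> carrier G" using h t gp_carrier grp by (auto simp: group.is_monoid monoid.m_closed)
    have "t \<noteq> - t" using t by (auto simp: dirs_def)
    then have "stp (h, t) (?h, t)" using h t hc by (auto simp: stp_def Omega_def)
    from cstep[OF this] csame[OF hc one t] csame[OF h t one]
    have "d dvd ((c (?h, 1) - c (?h, t)) + (c (?h, t) - c (h, t) - 1) + (c (h, t) - c (h, 1)))"
      by (intro dvd_add)
    then show "d dvd (f ?h - f h - 1)" by (simp add: f_def algebra_simps)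
  qed
qed

lemma classfun_dvd2:
  assumes z0: "z0 \<in> Omega G n" and dv: "\<forall>m. walk m z0 z0 \<longrightarrow> d dvd int m"
  shows "d dvd 2"
proof -
  obtain f :: "'a \<Rightarrow> int" where F: "\<forall>h\<in>carrier G. \<forall>t\<in>dirs n. d dvd (f (h \<otimes>\<^bsub>G\<^esub> gen_pow G x t) - f h - 1)"
    using classfun[OF z0 dv] by blast
  have i1: "(1::nat) \<in> {1..n}" using n2 by auto
  have x1: "x 1 \<in> carrier G" using xc i1 by auto
  have d1: "int 1 \<in> dirs n" "- int 1 \<in> dirs n" using dirs_pos[OF i1] dirs_neg[OF i1] by auto
  have g1: "gen_pow G x 1 = x 1" "gen_pow G x (-1) = inv\<^bsub>G\<^esub> x 1" by (auto simp: gen_pow_def)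
  have "d dvd (f (\<one>\<^bsub>G\<^esub> \<otimes>\<^bsub>G\<^esub> x 1) - f \<one>\<^bsub>G\<^esub> - 1)"
    using F d1 g1 grp by (metis group.is_monoid monoid.one_closed of_nat_1)
  then have A: "d dvd (f (x 1) - f \<one>\<^bsub>G\<^esub> - 1)" using x1 grp by (simp add: group.is_monoid monoid.l_one)
  have "d dvd (f (x 1 \<otimes>\<^bsub>G\<^esub> inv\<^bsub>G\<^esub> x 1) - f (x 1) - 1)"
    using F d1 g1 x1 by (metis of_nat_1)
  then have B: "d dvd (f \<one>\<^bsub>G\<^esub> - f (x 1) - 1)" using x1 grp by (simp add: group.r_inv)
  from dvd_add[OF A B] have "d dvd (-2)" by simp
  then show ?thesis by simp
qed

lemma ret_dvd: "walk m a a \<Longrightarrow> state_period G n x alpha a dvd m"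
proof (cases "m = 0")
  case False
  assume "walk m a a"
  then have "m \<in> {m. 1 \<le> m \<and> 0 < nbrw_Pm G n x alpha m a a}" using False Pm_walk by auto
  then show ?thesis unfolding state_period_def by (rule Gcd_dvd)
qed simp

lemma period_dvd2: "a \<in> Omega G n \<Longrightarrow> state_period G n x alpha a dvd 2"
proof -
  assume a: "a \<in> Omega G n"
  have "int (state_period G n x alpha a) dvd 2"
    by (rule classfun_dvd2[OF a]) (auto dest: ret_dvd)
  then show ?thesis by (metis int_dvd_int_iff of_nat_numeral)
qed

lemma index2:
  assumes H: "subgroup H G" and c2: "card (rcosets\<^bsub>G\<^esub> H) = 2"
    and g: "g \<in> carrier G" "g \<notin> H" and k: "k \<in> carrier G" "k \<notin> H"
  shows "g \<otimes>\<^bsub>G\<^esub> inv\<^bsub>G\<^esub> k \<in> H"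
proof -
  interpret group G by (rule grp)
  have Hs: "H \<subseteq> carrier G" using H by (rule subgroup.subset)
  have fin: "finite (rcosets H)" using c2 by (metis card.infinite zero_neq_numeral)
  have HH: "H #> \<one> = H" using H Hs by (simp add: coset_mult_one)
  have R: "H \<in> rcosets H" "H #> g \<in> rcosets H" "H #> k \<in> rcosets H"
    using rcosetsI[OF Hs] g k HH by (metis one_closed)+
  have ng: "H #> g \<noteq> H" using rcos_self[OF g(1) H] g(2) by auto
  have nk: "H #> k \<noteq> H" using rcos_self[OF k(1) H] k(2) by auto
  have eq: "H #> g = H #> k"
  proof (rule ccontr)
    assume ne: "H #> g \<noteq> H #> k"
    have "card {H, H #> g, H #> k} = 3" using ng nk ne by auto
    moreover have "card {H, H #> g, H #> k} \<le> card (rcosets H)"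
      using R fin by (intro card_mono) auto
    ultimately show False using c2 by simp
  qed
  have "g \<in> H #> k" using eq rcos_self[OF g(1) H] by simp
  then obtain h where h: "h \<in> H" "g = h \<otimes> k" by (auto simp: r_coset_def)
  then have "g \<otimes> inv k = h" using k(1) Hs by (auto simp: m_assoc)
  then show ?thesis using h by simp
qed

lemma flip:
  assumes H: "subgroup H G" and c2: "card (rcosets\<^bsub>G\<^esub> H) = 2"
    and xn: "\<forall>i\<in>{1..n}. x i \<notin> H"
    and g: "g \<in> carrier G" and t: "t \<in> dirs n"
  shows "g \<otimes>\<^bsub>G\<^esub> gen_pow G x t \<in> H \<longleftrightarrow> g \<notin> H"
proof -
  interpret group G by (rule grp)
  let ?y = "gen_pow G x t"
  have yc: "?y \<in> carrier G" using gp_carrier[OF t] .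
  have yn: "?y \<notin> H"
  proof (cases "0 < t")
    case True
    then have "nat t \<in> {1..n}" using t by (auto simp: dirs_def)
    then show ?thesis using True xn by (simp add: gen_pow_def)
  next
    case False
    then have i: "nat (- t) \<in> {1..n}" using t by (auto simp: dirs_def)
    then have "x (nat (-t)) \<in> carrier G" using xc by auto
    then show ?thesis using False xn i H
      by (auto simp: gen_pow_def dest: subgroup.m_inv_closed[OF H] simp del: )
  qed
  have iy: "inv ?y \<notin> H" using yn H yc by (metis inv_inv subgroup.m_inv_closed)
  show ?thesis
  proof
    assume a: "g \<otimes> ?y \<in> H"
    show "g \<notin> H"
    proof
      assume "g \<in> H"
      then have "inv g \<otimes> (g \<otimes> ?y) \<in> H" using a H by (simp add: subgroup.m_closed subgroup.m_inv_closed)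
      then show False using yn g yc by (simp add: m_assoc[symmetric])
    qed
  next
    assume "g \<notin> H"
    from index2[OF H c2 g this inv_closed[OF yc] iy] show "g \<otimes> ?y \<in> H" using yc by simp
  qed
qed

lemma walk_par:
  assumes H: "subgroup H G" and c2: "card (rcosets\<^bsub>G\<^esub> H) = 2"
    and xn: "\<forall>i\<in>{1..n}. x i \<notin> H"
  shows "walk m a b \<Longrightarrow> (fst b \<in> H \<longleftrightarrow> (fst a \<in> H \<longleftrightarrow> even m))"
proof (induction rule: walk.induct)
  case (w0 a)
  then show ?case by simp
next
  case (wS a c m b)
  have "fst a \<in> carrier G" using wS(1) by (auto simp: stp_def Omega_def)
  then have "fst c \<in> H \<longleftrightarrow> fst a \<notin> H"
    using flip[OF H c2 xn] stp_form[OF wS(1)] by (metis fstI)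
  then show ?case using wS(3) by auto
qed

lemma dir_back:
  assumes H: "subgroup H G" and c2: "card (rcosets\<^bsub>G\<^esub> H) = 2"
    and xn: "\<forall>i\<in>{1..n}. x i \<notin> H" and a: "a \<in> Omega G n"
  shows "state_period G n x alpha a = 2"
proof -
  have "2 dvd state_period G n x alpha a"
    unfolding state_period_def
  proof (rule Gcd_greatest)
    fix m assume "m \<in> {m. 1 \<le> m \<and> 0 < nbrw_Pm G n x alpha m a a}"
    then have "walk m a a" using Pm_walk by auto
    from walk_par[OF H c2 xn this] show "2 dvd m" by auto
  qed
  with period_dvd2[OF a] show ?thesis by (simp add: dvd_antisym)
qed

lemma dir_fwd:
  assumes per: "nbrw_has_period G n x alpha 2"
  shows "\<exists>H. subgroup H G \<and> card (rcosets\<^bsub>G\<^esub> H) = 2 \<and> (\<forall>i\<in>{1..n}. x i \<notin> H)"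
proof -
  interpret group G by (rule grp)
  have one: "(1::int) \<in> dirs n" using n2 by (auto simp: dirs_def)
  define z0 where "z0 = (\<one>, 1::int)"
  have z0: "z0 \<in> Omega G n" using one by (simp add: z0_def Omega_def)
  have "state_period G n x alpha z0 = 2" using per z0 by (simp add: nbrw_has_period_def)
  then have dv: "\<forall>m. walk m z0 z0 \<longrightarrow> (2::int) dvd int m"
    using ret_dvd by (metis int_dvd_int_iff of_nat_numeral)
  obtain f :: "'a \<Rightarrow> int" where F: "\<forall>h\<in>carrier G. \<forall>t\<in>dirs n. 2 dvd (f (h \<otimes> gen_pow G x t) - f h - 1)"
    using classfun[OF z0 dv] by blast
  have hom: "2 dvd (f (g \<otimes> k) - f g - f k + f \<one>)" if g: "g \<in> carrier G" and k: "k \<in> carrier G" for g k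
  proof -
    have kO: "(k, 1::int) \<in> Omega G n" using k one by (simp add: Omega_def)
    obtain m where w: "walk m z0 (k, 1)" using irr'[OF z0 kO] by blast
    have A: "2 dvd (f k - f \<one> - int m)" using walk_f[OF F w] by (simp add: z0_def)
    have "walk m (g \<otimes> \<one>, 1) (g \<otimes> k, 1)" using walk_transl[OF g w] by (simp add: z0_def)
    then have "walk m (g, 1) (g \<otimes> k, 1)" using g by simp
    from walk_f[OF F this] have B: "2 dvd (f (g \<otimes> k) - f g - int m)" by simp
    from dvd_diff[OF B A] show ?thesis by (simp add: algebra_simps)
  qed
  define H where "H = {g \<in> carrier G. 2 dvd (f g - f \<one>)}"
  have sg: "subgroup H G"
  proof (rule subgroupI)
    show "H \<subseteq> carrier G" by (auto simp: H_def)
    show "H \<noteq> {}" by (auto simp: H_def intro!: exI[of _ \<one>])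
  next
    fix a assume a: "a \<in> H"
    then have ac: "a \<in> carrier G" by (simp add: H_def)
    from hom[OF ac inv_closed[OF ac]] have "2 dvd (f \<one> - f a - f (inv a) + f \<one>)" using ac by simp
    with a show "inv a \<in> H" using ac by (auto simp: H_def)
  next
    fix a b assume a: "a \<in> H" and b: "b \<in> H"
    then have ac: "a \<in> carrier G" and bc: "b \<in> carrier G" by (auto simp: H_def)
    from hom[OF ac bc] a b show "a \<otimes> b \<in> H" using ac bc by (auto simp: H_def; presburger)
  qed
  have xn: "x i \<notin> H" if i: "i \<in> {1..n}" for i
  proof -
    have "2 dvd (f (\<one> \<otimes> gen_pow G x (int i)) - f \<one> - 1)" using F dirs_pos[OF i] by auto
    then have "2 dvd (f (x i) - f \<one> - 1)" using gp_pos[OF i] xc i by simp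
    then show ?thesis by (auto simp: H_def; presburger)
  qed
  have i1: "(1::nat) \<in> {1..n}" using n2 by auto
  have x1: "x 1 \<in> carrier G" "x 1 \<notin> H" using xc i1 xn[OF i1] by auto
  have Hs: "H \<subseteq> carrier G" by (auto simp: H_def)
  have R: "rcosets H = {H, H #> x 1}"
  proof
    show "rcosets H \<subseteq> {H, H #> x 1}"
    proof
      fix C assume "C \<in> rcosets H"
      then obtain g where g: "g \<in> carrier G" "C = H #> g" by (auto simp: RCOSETS_def)
      show "C \<in> {H, H #> x 1}"
      proof (cases "g \<in> H")
        case True
        then show ?thesis using g coset_join2[OF g(1) sg] by simp
      next
        case False
        have gi: "g \<otimes> inv x 1 \<in> H"
        proof -
          from hom[OF g(1) inv_closed[OF x1(1)]] have h1: "2 dvd (f (g \<otimes> inv x 1) - f g - f (inv x 1) + f \<one>)" .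
          from hom[OF x1(1) inv_closed[OF x1(1)]] have h2: "2 dvd (f \<one> - f (x 1) - f (inv x 1) + f \<one>)"
            using r_inv[OF x1(1)] by metis
          have "\<not> 2 dvd (f g - f \<one>)" using False g by (simp add: H_def)
          moreover have "\<not> 2 dvd (f (x 1) - f \<one>)" using x1 by (simp add: H_def)
          ultimately have "2 dvd (f (g \<otimes> inv x 1) - f \<one>)" using h1 h2 by presburger
          then show ?thesis using g x1 by (simp add: H_def)
        qed
        have "g \<in> H #> x 1"
          using gi x1 g by (auto simp: r_coset_def m_assoc intro!: bexI[of _ "g \<otimes> inv x 1"])
        then have "H #> x 1 = H #> g" using repr_independence[OF _ x1(1) sg] by blast
        then show ?thesis using g by simp
      qed
    qed
  next
    show "{H, H #> x 1} \<subseteq> rcosets H"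
      using rcosetsI[OF Hs x1(1)] rcosetsI[OF Hs one_closed] coset_mult_one[OF Hs] by auto
  qed
  have "H \<noteq> H #> x 1" using rcos_self[OF x1(1) sg] x1(2) by auto
  then have "card (rcosets H) = 2" using R by simp
  then show ?thesis using sg xn by blast
qed

end

theorem mainTheorem3:
  fixes G :: "('a, 'b) monoid_scheme" and n :: nat and x :: "nat \<Rightarrow> 'a"
    and alpha :: "int \<Rightarrow> int \<Rightarrow> real" and beta :: "int \<Rightarrow> real"
  assumes "group G"
    and "2 \<le> n"
    and "\<forall>i\<in>{1..n}. x i \<in> carrier G"
    and "nbrw_params n alpha beta"
    and "nbrw_irreducible G n x alpha"
  shows "nbrw_has_period G n x alpha 2 \<longleftrightarrow>
    (\<exists>H. subgroup H G \<and> card (rcosets\<^bsub>G\<^esub> H) = 2 \<and> (\<forall>i\<in>{1..n}. x i \<notin> H))"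
proof -
  have "nbw G n x alpha" using assms by (intro nbw.intro) (auto simp: nbrw_params_def)
  then interpret nbw G n x alpha .
  show ?thesis
  proof
    assume "nbrw_has_period G n x alpha 2"
    then show "\<exists>H. subgroup H G \<and> card (rcosets\<^bsub>G\<^esub> H) = 2 \<and> (\<forall>i\<in>{1..n}. x i \<notin> H)"
      by (rule dir_fwd)
  next
    assume "\<exists>H. subgroup H G \<and> card (rcosets\<^bsub>G\<^esub> H) = 2 \<and> (\<forall>i\<in>{1..n}. x i \<notin> H)"
    then obtain H where "subgroup H G" "card (rcosets\<^bsub>G\<^esub> H) = 2" "\<forall>i\<in>{1..n}. x i \<notin> H" by blast
    then show "nbrw_has_period G n x alpha 2"
      using dir_back by (auto simp: nbrw_has_period_def)
  qed
qed

end
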